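(* Let $(X,d)$ be a complete metric space and $T:X\to X$ a map. For $x,y\in X$ define $$P(x,y)=\max\{d(x,Tx)+d(Tx,y),\ d(T^2x,y)+d(T^2x,Ty),\ d(Tx,T^2x)+d(Tx,y),\ d(Tx,y)+d(Tx,Ty),\ d(x,y),\ d(x,Ty),\ d(y,Ty)\},$$ $$Q(x,y)=\max\{d(x,Tx)+d(Tx,T^2x),\ d(x,Tx)+d(Tx,y),\ d(T^2x,Ty)+d(y,Ty),\ d(Tx,T^2x)+d(T^2x,Ty),\ d(x,y),\ d(x,Ty)\}.$$ Suppose there is $\gamma\in[0,1/2)$ such that $d(Tx,Ty)\le\gamma\max\{P(x,y),Q(x,y)\}$ for all $x,y\in X$. Then $T$ is globally strong Picard modulo $d$: for every $x\in X$ the sequence $(T^nx)_{n\ge0}$ converges in $(X,d)$, its limit is a fixed point of $T$, and $T$ has at most one (hence exactly one) fixed point. *)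

theory Defs
  imports "HOL-Analysis.Analysis"
begin

definition P_fun :: "('a::metric_space \<Rightarrow> 'a) \<Rightarrow> 'a \<Rightarrow> 'a \<Rightarrow> real" where
  "P_fun T x y = Max {dist x (T x) + dist (T x) y,
                      dist (T (T x)) y + dist (T (T x)) (T y),
                      dist (T x) (T (T x)) + dist (T x) y,
                      dist (T x) y + dist (T x) (T y),
                      dist x y, dist x (T y), dist y (T y)}"

definition Q_fun :: "('a::metric_space \<Rightarrow> 'a) \<Rightarrow> 'a \<Rightarrow> 'a \<Rightarrow> real" where
  "Q_fun T x y = Max {dist x (T x) + dist (T x) (T (T x)),
                      dist x (T x) + dist (T x) y,
                      dist (T (T x)) (T y) + dist y (T y),
                      dist (T x) (T (T x)) + dist (T (T x)) (T y),
                      dist x y, dist x (T y)}"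

end

theory Submission
  imports Defs
begin

lemma geom_cauchy:
  fixes s :: "nat \<Rightarrow> 'a::metric_space"
  assumes k: "0 \<le> k" "k < 1" and d: "\<And>n. dist (s n) (s (Suc n)) \<le> C * k^n"
  shows "Cauchy s"
proof -
  have "dist (s 0) (s (Suc 0)) \<le> C" using d[of 0] by simp
  moreover have "0 \<le> dist (s 0) (s (Suc 0))" by simp
  ultimately have C: "C \<ge> 0" by linarith
  have bnd: "dist (s m) (s (m+p)) \<le> C * k^m * (\<Sum>i<p. k^i)" for m p
  proof (induction p)
    case 0 then show ?case by simp
  next
    case (Suc p)
    have "dist (s m) (s (m + Suc p)) \<le> dist (s m) (s (m+p)) + dist (s (m+p)) (s (Suc (m+p)))"
      by (simp add: dist_triangle)
    also have "\<dots> \<le> C * k^m * (\<Sum>i<p. k^i) + C * k^(m+p)" using Suc d[of "m+p"] by linarith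
    also have "\<dots> = C * k^m * (\<Sum>i<Suc p. k^i)" by (simp add: algebra_simps power_add)
    finally show ?case .
  qed
  have sb: "(\<Sum>i<p. k^i) \<le> 1/(1-k)" for p
  proof -
    have "(\<Sum>i<p. k^i) = (1 - k^p)/(1-k)" using k by (simp add: sum_gp_strict)
    also have "\<dots> \<le> 1/(1-k)" using k by (simp add: divide_right_mono)
    finally show ?thesis .
  qed
  have bnd2: "dist (s m) (s (m+p)) \<le> C * k^m / (1-k)" for m p
  proof -
    have "C * k^m * (\<Sum>i<p. k^i) \<le> C * k^m * (1/(1-k))"
      using sb C k by (intro mult_left_mono) auto
    then show ?thesis using bnd[of m p] by simp
  qed
  have lim: "(\<lambda>n. C * k^n / (1-k)) \<longlonglongrightarrow> 0"
    using k by (intro tendsto_eq_intros LIMSEQ_power_zero) auto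
  show ?thesis
    unfolding Cauchy_altdef2
  proof (intro allI impI)
    fix e :: real assume "e > 0"
    with lim obtain N where N: "\<And>n. n \<ge> N \<Longrightarrow> \<bar>C * k^n / (1-k)\<bar> < e"
      by (metis LIMSEQ_D diff_zero dist_real_def real_norm_def)
    show "\<exists>N. \<forall>n\<ge>N. dist (s n) (s N) < e"
    proof (intro exI allI impI)
      fix n assume "n \<ge> N"
      then obtain p where "n = N + p" using le_Suc_ex by blast
      then have "dist (s n) (s N) \<le> C * k^N / (1-k)" using bnd2[of N p] by (simp add: dist_commute)
      then show "dist (s n) (s N) < e" using N[of N] abs_ge_self[of "C*k^N/(1-k)"] by linarith
    qed
  qed
qed

lemma PQ_step:
  fixes T :: "'a::metric_space \<Rightarrow> 'a"
  shows "max (P_fun T x (T x)) (Q_fun T x (T x)) \<le> dist x (T x) + dist (T x) (T (T x))"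
proof -
  have t: "dist x (T (T x)) \<le> dist x (T x) + dist (T x) (T (T x))" by (rule dist_triangle)
  show ?thesis unfolding P_fun_def Q_fun_def
    using t by (simp add: dist_commute)
qed

lemma PQ_fix:
  fixes T :: "'a::metric_space \<Rightarrow> 'a"
  shows "max (P_fun T x y) (Q_fun T x y) \<le> 2 * dist y (T y) + 2 * (dist x y + dist (T x) y + dist (T (T x)) y)"
proof -
  define e where "e = dist y (T y)"
  have t1: "dist x (T x) \<le> dist x y + dist (T x) y" by (metis dist_commute dist_triangle)
  have t2: "dist (T (T x)) (T y) \<le> dist (T (T x)) y + e" unfolding e_def by (rule dist_triangle)
  have t3: "dist (T x) (T (T x)) \<le> dist (T x) y + dist (T (T x)) y" by (metis dist_commute dist_triangle)
  have t4: "dist (T x) (T y) \<le> dist (T x) y + e" unfolding e_def by (rule dist_triangle)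
  have t5: "dist x (T y) \<le> dist x y + e" unfolding e_def by (rule dist_triangle)
  have p: "0 \<le> dist x y" "0 \<le> dist (T x) y" "0 \<le> dist (T (T x)) y" "0 \<le> e" by (auto simp: e_def)
  show ?thesis unfolding P_fun_def Q_fun_def e_def[symmetric]
    apply simp
    apply (intro conjI)
    apply (insert t1 t2 t3 t4 t5 p; linarith)+
    done
qed

lemma PQ_two:
  fixes T :: "'a::metric_space \<Rightarrow> 'a"
  assumes "T u = u" "T v = v"
  shows "max (P_fun T u v) (Q_fun T u v) \<le> 2 * dist u v"
  unfolding P_fun_def Q_fun_def using assms by simp

theorem theorem4:
  fixes T :: "'a::complete_space \<Rightarrow> 'a" and \<gamma> :: real
  assumes "0 \<le> \<gamma>" and "\<gamma> < 1/2"
    and "\<And>x y. dist (T x) (T y) \<le> \<gamma> * max (P_fun T x y) (Q_fun T x y)"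
  shows "(\<forall>x. \<exists>z. (\<lambda>n. (T ^^ n) x) \<longlonglongrightarrow> z \<and> T z = z)
         \<and> (\<forall>u v. T u = u \<and> T v = v \<longrightarrow> u = v)"
proof -
  note A = assms(3)
  define k where "k = \<gamma>/(1-\<gamma>)"
  have k: "0 \<le> k" "k < 1" using assms(1,2) by (auto simp: k_def field_simps)
  have step: "dist (T x) (T (T x)) \<le> k * dist x (T x)" for x
  proof -
    have h: "dist (T x) (T (T x)) \<le> \<gamma> * (dist x (T x) + dist (T x) (T (T x)))"
      using A[of x "T x"] PQ_step[of T x] assms(1) mult_left_mono order_trans by blast
    then have "(1-\<gamma>) * dist (T x) (T (T x)) \<le> \<gamma> * dist x (T x)" by (simp add: algebra_simps)
    then show ?thesis using assms(2) unfolding k_def by (simp add: le_divide_eq mult.commute)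
  qed
  have part1: "\<exists>z. (\<lambda>n. (T ^^ n) x) \<longlonglongrightarrow> z \<and> T z = z" for x
  proof -
    define s where "s n = (T ^^ n) x" for n
    have sS: "s (Suc n) = T (s n)" for n by (simp add: s_def)
    have dn: "dist (s n) (s (Suc n)) \<le> dist x (T x) * k^n" for n
    proof (induction n)
      case 0 then show ?case by (simp add: s_def)
    next
      case (Suc n)
      have "dist (s (Suc n)) (s (Suc (Suc n))) \<le> k * dist (s n) (s (Suc n))"
        using step[of "s n"] by (simp add: sS)
      also have "\<dots> \<le> k * (dist x (T x) * k^n)" using Suc k by (intro mult_left_mono) auto
      finally show ?case by (simp add: algebra_simps)
    qed
    have "Cauchy s" by (rule geom_cauchy[OF k dn])
    then obtain z where z: "s \<longlonglongrightarrow> z" using Cauchy_convergent_iff convergent_def by blast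
    define e where "e = dist z (T z)"
    define a where "a n = dist (s n) z" for n
    have a0: "a \<longlonglongrightarrow> 0" using z unfolding a_def by (simp add: tendsto_dist_iff[symmetric])
    define r where "r n = a (Suc n) + 2*\<gamma>*(a n + a (Suc n) + a (Suc (Suc n)))" for n
    have r0: "r \<longlonglongrightarrow> 0"
    proof -
      have a1: "(\<lambda>n. a (Suc n)) \<longlonglongrightarrow> 0" using a0 by (rule LIMSEQ_Suc)
      have a2: "(\<lambda>n. a (Suc (Suc n))) \<longlonglongrightarrow> 0" using a1 by (rule LIMSEQ_Suc)
      have "(\<lambda>n. a (Suc n) + 2*\<gamma>*(a n + a (Suc n) + a (Suc (Suc n)))) \<longlonglongrightarrow> 0 + 2*\<gamma>*(0+0+0)"
        by (intro tendsto_intros a0 a1 a2)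
      then show ?thesis unfolding r_def by simp
    qed
    have bound: "(1-2*\<gamma>) * e \<le> r n" for n
    proof -
      have "e \<le> dist z (s (Suc n)) + dist (s (Suc n)) (T z)" unfolding e_def by (rule dist_triangle)
      also have "dist (s (Suc n)) (T z) \<le> \<gamma> * (2 * e + 2 * (a n + a (Suc n) + a (Suc (Suc n))))"
        using A[of "s n" z] PQ_fix[of T "s n" z] assms(1) mult_left_mono order_trans
        unfolding a_def e_def sS by blast
      finally show ?thesis unfolding r_def a_def by (simp add: dist_commute algebra_simps)
    qed
    have "(1-2*\<gamma>) * e \<le> 0" using LIMSEQ_le_const[OF r0] bound by blast
    then have "e \<le> 0" using assms(2) by (simp add: mult_le_0_iff)
    then have "T z = z" unfolding e_def by simp
    then show ?thesis using z unfolding s_def by blast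
  qed
  have part2: "u = v" if "T u = u" "T v = v" for u v
  proof -
    have "dist u v \<le> \<gamma> * (2 * dist u v)"
      using A[of u v] PQ_two[of T u v] that assms(1) mult_left_mono order_trans by metis
    then have "(1 - 2*\<gamma>) * dist u v \<le> 0" by (simp add: algebra_simps)
    then have "dist u v \<le> 0" using assms(2) by (simp add: mult_le_0_iff)
    then show ?thesis by simp
  qed
  show ?thesis using part1 part2 by blast
qed

end
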